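(* Let $x\in(0,\pi/2)$, $p\in\mathbb{R}$, and consider the double inequality \[ \frac{1-(\cos x)^{q_2}}{3q_2}<\frac{1-\left(\frac{\sin x}{x}\right)^{p}}{p}<\frac{1-(\cos x)^{q_1}}{3q_1}. \tag{$*$} \] (i) If $p\ge \frac{\pi^2}{4}-1$, then $( * )$ holds for $q_2\ge \frac p3+\frac8{15}$ and $q_1\le 1$. (ii) If $p\in[\frac75,\frac{\pi^2}{4}-1)$, then $( * )$ holds for $q_2\ge \frac p3+\frac8{15}$ and $q_1\le \frac{34}{35}$. (iii) If $p\in[\frac{46}{35},\frac75)$, then $( * )$ holds for $q_2\ge 1$ and $q_1\le\frac{34}{35}$. (iv) If $p<\frac{46}{35}$, then $( * )$ holds for $q_2\ge1$ and $q_1\le \frac p3+\frac8{15}$.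
   Context: When $p=0$, $\frac{1-(\sin x/x)^p}{p}$ means $-\ln\frac{\sin x}{x}$; when $q_i=0$, $\frac{1-(\cos x)^{q_i}}{3q_i}$ means $-\frac13\ln\cos x$ (the limits of these expressions). *)

theory Defs
  imports Complex_Main
begin

definition Fsin :: "real \<Rightarrow> real \<Rightarrow> real" where
  "Fsin p x = (if p = 0 then - ln (sin x / x) else (1 - (sin x / x) powr p) / p)"

definition Gcos :: "real \<Rightarrow> real \<Rightarrow> real" where
  "Gcos q x = (if q = 0 then - ln (cos x) / 3 else (1 - (cos x) powr q) / (3 * q))"

definition double_ineq :: "real \<Rightarrow> real \<Rightarrow> real \<Rightarrow> real \<Rightarrow> bool" where
  "double_ineq p q1 q2 x \<longleftrightarrow> Gcos q2 x < Fsin p x \<and> Fsin p x < Gcos q1 x"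

end

theory Submission
  imports Defs "HOL-Analysis.Complex_Transcendental"
begin

lemma pi_lo: "3.1415926 < pi" and pi_hi: "pi < 3.1415927"
  using pi_approx by auto

lemma sin_up13:
  assumes "0 \<le> y" "y \<le> pi"
  shows "sin y \<le> y - y^3/6 + y^5/120 - y^7/5040 + y^9/362880 - y^11/39916800 + y^13/6227020800"
proof (cases "y = 0")
  case True then show ?thesis by simp
next
  case False
  then have "y > 0" using assms by simp
  from Maclaurin_sin_expansion3[OF _ this, of 14]
  obtain t where t: "0 < t" "t < y" and e: "sin y = (\<Sum>m<14. sin_coeff m * y ^ m) + sin (t + 1 / 2 * real 14 * pi) / fact 14 * y ^ 14"
    by auto
  have "sin (t + 1 / 2 * real 14 * pi) = - sin t"
  proof -
    have "1 / 2 * real 14 * pi = 7 * pi" by simp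
    then show ?thesis by (simp add: sin_add)
  qed
  moreover have "sin t > 0" using t assms by (intro sin_gt_zero) auto
  moreover have "(\<Sum>m<14. sin_coeff m * y ^ m) = y - y^3/6 + y^5/120 - y^7/5040 + y^9/362880 - y^11/39916800 + y^13/6227020800"
    by (simp add: lessThan_nat_numeral sin_coeff_def fact_numeral)
  moreover have "0 \<le> sin t / fact 14 * y ^ 14" using \<open>sin t > 0\<close> \<open>y > 0\<close> by simp
  ultimately show ?thesis using e by simp
qed

lemma cos_up12:
  assumes "0 \<le> y" "y \<le> pi"
  shows "cos y \<le> 1 - y^2/2 + y^4/24 - y^6/720 + y^8/40320 - y^10/3628800 + y^12/479001600"
proof (cases "y = 0")
  case True then show ?thesis by simp
next
  case False
  then have "y > 0" using assms by simp
  from Maclaurin_cos_expansion2[OF this, of 13]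
  obtain t where t: "0 < t" "t < y" and e: "cos y = (\<Sum>m<13. cos_coeff m * y ^ m) + cos (t + 1 / 2 * real 13 * pi) / fact 13 * y ^ 13"
    by auto
  have "cos (t + 1 / 2 * real 13 * pi) = - sin t"
  proof -
    have "cos (t + 1 / 2 * real 13 * pi) = cos ((t + pi/2) + 6 * pi)" by (rule arg_cong[where f=cos]) simp
    also have "\<dots> = - sin t" by (simp only: cos_add sin_add) simp
    finally show ?thesis .
  qed
  moreover have "sin t > 0" using t assms by (intro sin_gt_zero) auto
  moreover have "(\<Sum>m<13. cos_coeff m * y ^ m) = 1 - y^2/2 + y^4/24 - y^6/720 + y^8/40320 - y^10/3628800 + y^12/479001600"
    by (simp add: lessThan_nat_numeral cos_coeff_def fact_numeral)
  moreover have "0 \<le> sin t / fact 13 * y ^ 13" using \<open>sin t > 0\<close> \<open>y > 0\<close> by simp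
  ultimately show ?thesis using e by simp
qed

lemma cos_lo2:
  assumes "0 \<le> y" "y \<le> pi"
  shows "1 - y^2/2 \<le> cos y"
proof (cases "y = 0")
  case True then show ?thesis by simp
next
  case False
  then have "y > 0" using assms by simp
  from Maclaurin_cos_expansion2[OF this, of 3]
  obtain t where t: "0 < t" "t < y" and e: "cos y = (\<Sum>m<3. cos_coeff m * y ^ m) + cos (t + 1 / 2 * real 3 * pi) / fact 3 * y ^ 3"
    by auto
  have "cos (t + 1 / 2 * real 3 * pi) = sin t"
  proof -
    have "cos (t + 1 / 2 * real 3 * pi) = cos ((t + pi/2) + pi)" by (rule arg_cong[where f=cos]) simp
    also have "\<dots> = sin t" by (simp only: cos_add sin_add) simp
    finally show ?thesis .
  qed
  moreover have "sin t > 0" using t assms by (intro sin_gt_zero) auto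
  moreover have "(\<Sum>m<3. cos_coeff m * y ^ m) = 1 - y^2/2"
    by (simp add: lessThan_nat_numeral cos_coeff_def fact_numeral)
  moreover have "0 \<le> sin t / fact 3 * y ^ 3" using \<open>sin t > 0\<close> \<open>y > 0\<close> by simp
  ultimately show ?thesis using e by simp
qed

lemma sin_lo3:
  assumes "0 \<le> y" "y \<le> pi"
  shows "y - y^3/6 \<le> sin y"
proof (cases "y = 0")
  case True then show ?thesis by simp
next
  case False
  then have "y > 0" using assms by simp
  from Maclaurin_sin_expansion3[OF _ this, of 4]
  obtain t where t: "0 < t" "t < y" and e: "sin y = (\<Sum>m<4. sin_coeff m * y ^ m) + sin (t + 1 / 2 * real 4 * pi) / fact 4 * y ^ 4"
    by auto
  have "sin (t + 1 / 2 * real 4 * pi) = sin t"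
  proof -
    have "1 / 2 * real 4 * pi = 2 * pi" by simp
    then show ?thesis by (simp add: sin_add)
  qed
  moreover have "sin t > 0" using t assms by (intro sin_gt_zero) auto
  moreover have "(\<Sum>m<4. sin_coeff m * y ^ m) = y - y^3/6"
    by (simp add: lessThan_nat_numeral sin_coeff_def fact_numeral)
  moreover have "0 \<le> sin t / fact 4 * y ^ 4" using \<open>sin t > 0\<close> \<open>y > 0\<close> by simp
  ultimately show ?thesis using e by simp
qed


lemma pos_from_zero:
  fixes f f' :: "real \<Rightarrow> real" and X x :: real
  assumes d: "\<And>y. 0 < y \<Longrightarrow> y < X \<Longrightarrow> (f has_real_derivative f' y) (at y)"
      and p: "\<And>y. 0 < y \<Longrightarrow> y < X \<Longrightarrow> f' y > 0"
      and l: "(f \<longlongrightarrow> 0) (at_right 0)"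
      and x: "0 < x" "x < X"
  shows "f x > 0"
proof -
  have inc: "f u < f v" if "0 < u" "u < v" "v < X" for u v
  proof (rule DERIV_pos_imp_increasing_open[OF \<open>u < v\<close>])
    show "\<And>y. u < y \<Longrightarrow> y < v \<Longrightarrow> \<exists>z. (f has_real_derivative z) (at y) \<and> 0 < z"
      using d p that by (meson less_trans)
    show "continuous_on {u..v} f"
      using d that by (intro DERIV_continuous_on[of _ _ f']) (auto intro: has_field_derivative_at_within)
  qed
  have "eventually (\<lambda>y. f y \<le> f (x/2)) (at_right 0)"
    unfolding eventually_at_right_field using x
    by (intro exI[of _ "x/2"]) (auto intro!: less_imp_le[OF inc])
  hence "0 \<le> f (x/2)"
    using l by (intro tendsto_upperbound[of f 0]) auto
  also have "f (x/2) < f x" using x by (intro inc) auto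
  finally show ?thesis .
qed

lemma cont_lim0: "isCont f 0 \<Longrightarrow> f 0 = (0::real) \<Longrightarrow> (f \<longlongrightarrow> 0) (at_right (0::real))"
  by (metis isCont_def tendsto_mono at_le subset_UNIV)

lemma chain:
  fixes f g :: "real \<Rightarrow> real"
  assumes "\<And>y. 0 < y \<Longrightarrow> y < X \<Longrightarrow> (f has_real_derivative g y) (at y)"
     "\<And>y. 0 < y \<Longrightarrow> y < X \<Longrightarrow> g y > 0" "isCont f 0" "f 0 = 0" "0 < x" "x < X"
  shows "f x > 0"
  using pos_from_zero[OF assms(1,2) cont_lim0[OF assms(3,4)] assms(5,6)] .


lemma hN_0: assumes "0 < x" "x < pi/2" shows "0 < (sin x - x * cos x)"
  apply (rule chain[where X="pi/2" and f="\<lambda>x. (sin x - x * cos x)" and g="\<lambda>y. (y * sin y)"])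
  subgoal for y
    apply (rule derivative_eq_intros refl)+ apply (simp add: numeral_2_eq_2)
    apply (use sin_cos_squared_add[of y] in algebra)? done
  subgoal for y using pi_gt_zero by (auto intro!: mult_pos_pos sin_gt_zero cos_gt_zero)
  subgoal by (intro continuous_intros)
  subgoal by simp
  using assms by auto

lemma hA_4: assumes "0 < x" "x < pi/2" shows "0 < (16 * sin x * cos x - 16 * x + 32 * x * sin x^2)"
  apply (rule chain[where X="pi/2" and f="\<lambda>x. (16 * sin x * cos x - 16 * x + 32 * x * sin x^2)" and g="\<lambda>y. (64 * y * sin y * cos y)"])
  subgoal for y
    apply (rule derivative_eq_intros refl)+ apply (simp add: numeral_2_eq_2)
    apply (use sin_cos_squared_add[of y] in algebra)? done
  subgoal for y using pi_gt_zero by (auto intro!: mult_pos_pos sin_gt_zero cos_gt_zero)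
  subgoal by (intro continuous_intros)
  subgoal by simp
  using assms by auto

lemma hA_3: assumes "0 < x" "x < pi/2" shows "0 < (12 * sin x * cos x - 12 * x + 24 * x * sin x^2 - 16 * x^2 * sin x * cos x)"
  apply (rule chain[where X="pi/2" and f="\<lambda>x. (12 * sin x * cos x - 12 * x + 24 * x * sin x^2 - 16 * x^2 * sin x * cos x)" and g="\<lambda>y. (y * (16 * sin y * cos y - 16 * y + 32 * y * sin y^2))"])
  subgoal for y
    apply (rule derivative_eq_intros refl)+ apply (simp add: numeral_2_eq_2)
    apply (use sin_cos_squared_add[of y] in algebra)? done
  subgoal for y using hA_4[of y] pi_gt_zero by (auto intro!: mult_pos_pos sin_gt_zero cos_gt_zero)
  subgoal by (intro continuous_intros)
  subgoal by simp
  using assms by auto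

lemma hA_2: assumes "0 < x" "x < pi/2" shows "0 < (16 * sin x^2 - 20 * x * sin x * cos x + 4 * x^2 - 8 * x^2 * sin x^2)"
  apply (rule chain[where X="pi/2" and f="\<lambda>x. (16 * sin x^2 - 20 * x * sin x * cos x + 4 * x^2 - 8 * x^2 * sin x^2)" and g="\<lambda>y. ((12 * sin y * cos y - 12 * y + 24 * y * sin y^2 - 16 * y^2 * sin y * cos y))"])
  subgoal for y
    apply (rule derivative_eq_intros refl)+ apply (simp add: numeral_2_eq_2)
    apply (use sin_cos_squared_add[of y] in algebra)? done
  subgoal for y using hA_3[of y] pi_gt_zero by (auto intro!: mult_pos_pos sin_gt_zero cos_gt_zero)
  subgoal by (intro continuous_intros)
  subgoal by simp
  using assms by auto

lemma hA_1: assumes "0 < x" "x < pi/2" shows "0 < (-15 * sin x * cos x + 15 * x - 14 * x * sin x^2 + 4 * x^2 * sin x * cos x)"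
  apply (rule chain[where X="pi/2" and f="\<lambda>x. (-15 * sin x * cos x + 15 * x - 14 * x * sin x^2 + 4 * x^2 * sin x * cos x)" and g="\<lambda>y. ((16 * sin y^2 - 20 * y * sin y * cos y + 4 * y^2 - 8 * y^2 * sin y^2))"])
  subgoal for y
    apply (rule derivative_eq_intros refl)+ apply (simp add: numeral_2_eq_2)
    apply (use sin_cos_squared_add[of y] in algebra)? done
  subgoal for y using hA_2[of y] pi_gt_zero by (auto intro!: mult_pos_pos sin_gt_zero cos_gt_zero)
  subgoal by (intro continuous_intros)
  subgoal by simp
  using assms by auto

lemma hA_0: assumes "0 < x" "x < pi/2" shows "0 < (-12 * sin x^2 + 9 * x * sin x * cos x + 3 * x^2 + 2 * x^2 * sin x^2)"
  apply (rule chain[where X="pi/2" and f="\<lambda>x. (-12 * sin x^2 + 9 * x * sin x * cos x + 3 * x^2 + 2 * x^2 * sin x^2)" and g="\<lambda>y. ((-15 * sin y * cos y + 15 * y - 14 * y * sin y^2 + 4 * y^2 * sin y * cos y))"])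
  subgoal for y
    apply (rule derivative_eq_intros refl)+ apply (simp add: numeral_2_eq_2)
    apply (use sin_cos_squared_add[of y] in algebra)? done
  subgoal for y using hA_1[of y] pi_gt_zero by (auto intro!: mult_pos_pos sin_gt_zero cos_gt_zero)
  subgoal by (intro continuous_intros)
  subgoal by simp
  using assms by auto

lemma hB_5: assumes "0 < x" "x < pi/2" shows "0 < (432 * sin x * cos x - 432 * x + 864 * x * sin x^2)"
  apply (rule chain[where X="pi/2" and f="\<lambda>x. (432 * sin x * cos x - 432 * x + 864 * x * sin x^2)" and g="\<lambda>y. (1728 * y * sin y * cos y)"])
  subgoal for y
    apply (rule derivative_eq_intros refl)+ apply (simp add: numeral_2_eq_2)
    apply (use sin_cos_squared_add[of y] in algebra)? done
  subgoal for y using pi_gt_zero by (auto intro!: mult_pos_pos sin_gt_zero cos_gt_zero)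
  subgoal by (intro continuous_intros)
  subgoal by simp
  using assms by auto

lemma hB_4: assumes "0 < x" "x < pi/2" shows "0 < (324 * sin x * cos x - 324 * x + 648 * x * sin x^2 - 432 * x^2 * sin x * cos x)"
  apply (rule chain[where X="pi/2" and f="\<lambda>x. (324 * sin x * cos x - 324 * x + 648 * x * sin x^2 - 432 * x^2 * sin x * cos x)" and g="\<lambda>y. (y * (432 * sin y * cos y - 432 * y + 864 * y * sin y^2))"])
  subgoal for y
    apply (rule derivative_eq_intros refl)+ apply (simp add: numeral_2_eq_2)
    apply (use sin_cos_squared_add[of y] in algebra)? done
  subgoal for y using hB_5[of y] pi_gt_zero by (auto intro!: mult_pos_pos sin_gt_zero cos_gt_zero)
  subgoal by (intro continuous_intros)
  subgoal by simp
  using assms by auto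

lemma hB_3: assumes "0 < x" "x < pi/2" shows "0 < (432 * sin x^2 - 540 * x * sin x * cos x + 108 * x^2 - 216 * x^2 * sin x^2)"
  apply (rule chain[where X="pi/2" and f="\<lambda>x. (432 * sin x^2 - 540 * x * sin x * cos x + 108 * x^2 - 216 * x^2 * sin x^2)" and g="\<lambda>y. ((324 * sin y * cos y - 324 * y + 648 * y * sin y^2 - 432 * y^2 * sin y * cos y))"])
  subgoal for y
    apply (rule derivative_eq_intros refl)+ apply (simp add: numeral_2_eq_2)
    apply (use sin_cos_squared_add[of y] in algebra)? done
  subgoal for y using hB_4[of y] pi_gt_zero by (auto intro!: mult_pos_pos sin_gt_zero cos_gt_zero)
  subgoal by (intro continuous_intros)
  subgoal by simp
  using assms by auto

lemma hB_2: assumes "0 < x" "x < pi/2" shows "0 < (-405 * sin x * cos x + 405 * x - 378 * x * sin x^2 + 108 * x^2 * sin x * cos x)"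
  apply (rule chain[where X="pi/2" and f="\<lambda>x. (-405 * sin x * cos x + 405 * x - 378 * x * sin x^2 + 108 * x^2 * sin x * cos x)" and g="\<lambda>y. ((432 * sin y^2 - 540 * y * sin y * cos y + 108 * y^2 - 216 * y^2 * sin y^2))"])
  subgoal for y
    apply (rule derivative_eq_intros refl)+ apply (simp add: numeral_2_eq_2)
    apply (use sin_cos_squared_add[of y] in algebra)? done
  subgoal for y using hB_3[of y] pi_gt_zero by (auto intro!: mult_pos_pos sin_gt_zero cos_gt_zero)
  subgoal by (intro continuous_intros)
  subgoal by simp
  using assms by auto

lemma hB_1: assumes "0 < x" "x < pi/2" shows "0 < (105 * sin x - 185 * sin x^3 - 105 * x * cos x + 150 * x * sin x^2 * cos x + 36 * x^2 * sin x^3)"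
  apply (rule chain[where X="pi/2" and f="\<lambda>x. (105 * sin x - 185 * sin x^3 - 105 * x * cos x + 150 * x * sin x^2 * cos x + 36 * x^2 * sin x^3)" and g="\<lambda>y. (sin y * (-405 * sin y * cos y + 405 * y - 378 * y * sin y^2 + 108 * y^2 * sin y * cos y))"])
  subgoal for y
    apply (rule derivative_eq_intros refl)+ apply (simp add: numeral_2_eq_2)
    apply (use sin_cos_squared_add[of y] in algebra)? done
  subgoal for y using hB_2[of y] pi_gt_zero by (auto intro!: mult_pos_pos sin_gt_zero cos_gt_zero)
  subgoal by (intro continuous_intros)
  subgoal by simp
  using assms by auto

lemma hB_0: assumes "0 < x" "x < pi/2" shows "0 < (81 * sin x^2 * cos x - 57 * x * sin x + 58 * x * sin x^3 - 24 * x^2 * cos x - 12 * x^2 * sin x^2 * cos x)"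
  apply (rule chain[where X="pi/2" and f="\<lambda>x. (81 * sin x^2 * cos x - 57 * x * sin x + 58 * x * sin x^3 - 24 * x^2 * cos x - 12 * x^2 * sin x^2 * cos x)" and g="\<lambda>y. ((105 * sin y - 185 * sin y^3 - 105 * y * cos y + 150 * y * sin y^2 * cos y + 36 * y^2 * sin y^3))"])
  subgoal for y
    apply (rule derivative_eq_intros refl)+ apply (simp add: numeral_2_eq_2)
    apply (use sin_cos_squared_add[of y] in algebra)? done
  subgoal for y using hB_1[of y] pi_gt_zero by (auto intro!: mult_pos_pos sin_gt_zero cos_gt_zero)
  subgoal by (intro continuous_intros)
  subgoal by simp
  using assms by auto

lemma hC_1: assumes "0 < x" "x < pi/2" shows "0 < (4 * sin x - 4 * x * cos x)"
  apply (rule chain[where X="pi/2" and f="\<lambda>x. (4 * sin x - 4 * x * cos x)" and g="\<lambda>y. (4 * y * sin y)"])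
  subgoal for y
    apply (rule derivative_eq_intros refl)+ apply (simp add: numeral_2_eq_2)
    apply (use sin_cos_squared_add[of y] in algebra)? done
  subgoal for y using pi_gt_zero by (auto intro!: mult_pos_pos sin_gt_zero cos_gt_zero)
  subgoal by (intro continuous_intros)
  subgoal by simp
  using assms by auto

lemma hC_0: assumes "0 < x" "x < pi/2" shows "0 < (-3 * sin x * cos x + 3 * x - 2 * x * sin x^2)"
  apply (rule chain[where X="pi/2" and f="\<lambda>x. (-3 * sin x * cos x + 3 * x - 2 * x * sin x^2)" and g="\<lambda>y. (sin y * (4 * sin y - 4 * y * cos y))"])
  subgoal for y
    apply (rule derivative_eq_intros refl)+ apply (simp add: numeral_2_eq_2)
    apply (use sin_cos_squared_add[of y] in algebra)? done
  subgoal for y using hC_1[of y] pi_gt_zero by (auto intro!: mult_pos_pos sin_gt_zero cos_gt_zero)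
  subgoal by (intro continuous_intros)
  subgoal by simp
  using assms by auto


definition NN :: "real \<Rightarrow> real" where "NN y = sin y - y * cos y"
definition aa :: "real \<Rightarrow> real" where "aa y = ln y - ln (sin y)"
definition bb :: "real \<Rightarrow> real" where "bb y = - ln (cos y)"
definition ll :: "real \<Rightarrow> real" where "ll y = ln 3 + ln (NN y) - 2 * ln y - ln (sin y)"

lemma sin_pos01: "0 < (y::real) \<Longrightarrow> y < 1 \<Longrightarrow> 0 < sin y"
  using pi_gt3 by (intro sin_gt_zero) auto

lemma nonneg_from_zero:
  fixes f f' :: "real \<Rightarrow> real"
  assumes "\<And>y. 0 \<le> y \<Longrightarrow> y \<le> x \<Longrightarrow> (f has_real_derivative f' y) (at y)"
    "\<And>y. 0 \<le> y \<Longrightarrow> y \<le> x \<Longrightarrow> f' y \<ge> 0" "f 0 = 0" "0 \<le> x"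
  shows "f x \<ge> 0"
  using DERIV_nonneg_imp_nondecreasing[of 0 x f] assms by (metis (no_types, lifting))

lemma NN_upper: assumes "0 \<le> x" shows "NN x \<le> x^3/3"
proof -
  have "0 \<le> x^3/3 - NN x"
  proof (rule nonneg_from_zero[where f="\<lambda>x. x^3/3 - NN x" and f'="\<lambda>y. y * (y - sin y)", OF _ _ _ assms])
    fix y :: real assume "0 \<le> y" "y \<le> x"
    show "((\<lambda>x. x^3/3 - NN x) has_real_derivative y * (y - sin y)) (at y)"
      unfolding NN_def apply (rule derivative_eq_intros refl | force)+ by (simp add: algebra_simps power2_eq_square)
    show "0 \<le> y * (y - sin y)" using \<open>0 \<le> y\<close> sin_x_le_x[of y] by simp
  qed (simp add: NN_def)
  then show ?thesis by simp
qed

lemma NN_lower: assumes "0 \<le> x" "x \<le> pi" shows "x^3/3 - x^5/30 \<le> NN x"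
proof -
  have "0 \<le> NN x - x^3/3 + x^5/30"
  proof (rule nonneg_from_zero[where f="\<lambda>x. NN x - x^3/3 + x^5/30" and f'="\<lambda>y. y * (sin y - y + y^3/6)", OF _ _ _ assms(1)])
    fix y :: real assume "0 \<le> y" "y \<le> x"
    show "((\<lambda>x. NN x - x^3/3 + x^5/30) has_real_derivative y * (sin y - y + y^3/6)) (at y)"
      unfolding NN_def apply (rule derivative_eq_intros refl | force)+ by (simp add: algebra_simps power2_eq_square power3_eq_cube power4_eq_xxxx)
    show "0 \<le> y * (sin y - y + y^3/6)" using \<open>0 \<le> y\<close> \<open>y \<le> x\<close> assms sin_lo3[of y] by simp
  qed (simp add: NN_def)
  then show ?thesis by simp
qed

lemma lim_sinc: "((\<lambda>y::real. sin y / y) \<longlongrightarrow> 1) (at_right 0)"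
proof (rule tendsto_sandwich[where f="\<lambda>y::real. 1 - y^2/6" and h="\<lambda>y::real. 1"])
  show "\<forall>\<^sub>F n in at_right (0::real). 1 - n\<^sup>2 / 6 \<le> sin n / n"
    unfolding eventually_at_right_field
  proof (intro exI[of _ 1] conjI allI impI)
    fix y :: real assume y: "0 < y" "y < 1"
    have "y - y^3/6 \<le> sin y" using sin_lo3[of y] y pi_gt3 by simp
    then show "1 - y\<^sup>2 / 6 \<le> sin y / y" using y by (simp add: field_simps power2_eq_square power3_eq_cube)
  qed simp
  show "\<forall>\<^sub>F n in at_right (0::real). sin n / n \<le> 1"
    unfolding eventually_at_right_field
    by (intro exI[of _ 1]) (auto simp: sin_x_le_x)
  have "((\<lambda>y. 1 - y^2/6) \<longlongrightarrow> 1 - 0^2/6) (at_right (0::real))"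
    by (intro tendsto_intros) auto
  then show "((\<lambda>y. 1 - y^2/6) \<longlongrightarrow> 1) (at_right (0::real))" by simp
qed simp

lemma lim_T: "((\<lambda>y. 3 * NN y / y^3) \<longlongrightarrow> 1) (at_right 0)"
proof (rule tendsto_sandwich[where f="\<lambda>y::real. 1 - y^2/10" and h="\<lambda>y::real. 1"])
  show "\<forall>\<^sub>F n in at_right (0::real). 1 - n\<^sup>2 / 10 \<le> 3 * NN n / n^3"
    unfolding eventually_at_right_field
  proof (intro exI[of _ 1] conjI allI impI)
    fix y :: real assume y: "0 < y" "y < 1"
    have "y^3/3 - y^5/30 \<le> NN y" using NN_lower[of y] y pi_gt3 by simp
    moreover have "(1 - y\<^sup>2 / 10) * y^3 = 3 * (y^3/3 - y^5/30)" by algebra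
    ultimately show "1 - y\<^sup>2 / 10 \<le> 3 * NN y / y^3" using y by (simp add: pos_le_divide_eq)
  qed simp
  show "\<forall>\<^sub>F n in at_right (0::real). 3 * NN n / n^3 \<le> 1"
    unfolding eventually_at_right_field
    by (intro exI[of _ 1]) (auto simp: pos_divide_le_eq dest: NN_upper[OF less_imp_le])
  have "((\<lambda>y. 1 - y^2/10) \<longlongrightarrow> 1 - 0^2/10) (at_right (0::real))"
    by (intro tendsto_intros) auto
  then show "((\<lambda>y. 1 - y^2/10) \<longlongrightarrow> 1) (at_right (0::real))" by simp
qed simp

lemma lim_aa: "(aa \<longlongrightarrow> 0) (at_right 0)"
proof -
  have "((\<lambda>y::real. ln (sin y / y)) \<longlongrightarrow> ln 1) (at_right 0)"
    by (rule tendsto_ln[OF lim_sinc]) simp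
  then have "((\<lambda>y::real. - ln (sin y / y)) \<longlongrightarrow> - 0) (at_right 0)"
    by (intro tendsto_minus) simp
  moreover have "\<forall>\<^sub>F y in at_right 0. - ln (sin y / y) = aa y"
    unfolding eventually_at_right_field aa_def
    by (intro exI[of _ 1]) (auto simp: ln_div dest: sin_pos01)
  ultimately show ?thesis by (simp add: tendsto_cong)
qed

lemma lim_bb: "(bb \<longlongrightarrow> 0) (at_right 0)"
proof -
  have "isCont bb 0" unfolding bb_def by (intro continuous_intros) auto
  then show ?thesis unfolding isCont_def using tendsto_mono[OF at_le[of "{0<..}" UNIV]]
    by (simp add: bb_def)
qed

lemma lim_ll: "(ll \<longlongrightarrow> 0) (at_right 0)"
proof -
  have "((\<lambda>y. ln (3 * NN y / y^3)) \<longlongrightarrow> ln 1) (at_right 0)"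
    by (rule tendsto_ln[OF lim_T]) simp
  then have "((\<lambda>y. ln (3 * NN y / y^3) + aa y) \<longlongrightarrow> 0 + 0) (at_right 0)"
    by (intro tendsto_add lim_aa) simp
  moreover have "\<forall>\<^sub>F y in at_right 0. ln (3 * NN y / y^3) + aa y = ll y"
    unfolding eventually_at_right_field
  proof (intro exI[of _ 1] conjI allI impI)
    fix y :: real assume y: "0 < y" "y < 1"
    have "y^2 < 1" using y by (simp add: power_less_one_iff)
    then have "0 < y^3 * (10 - y^2)" using y by simp
    moreover have "y^3 * (10 - y^2) = 30 * (y^3/3 - y^5/30)" by algebra
    ultimately have "0 < y^3/3 - y^5/30" by simp
    then have "0 < NN y" using NN_lower[of y] y pi_gt3 by simp
    then show "ln (3 * NN y / y^3) + aa y = ll y"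
      using y by (simp add: ll_def aa_def ln_div ln_mult ln_realpow)
  qed simp
  ultimately show ?thesis by (simp add: tendsto_cong)
qed


lemma trig_pos: assumes "0 < y" "y < pi/2" shows "0 < sin y" "0 < cos y" "0 < NN y"
  using assms hN_0[of y] by (auto intro!: sin_gt_zero cos_gt_zero simp: NN_def)

lemma deriv_aa: assumes "0 < y" "y < pi/2"
  shows "(aa has_real_derivative (1/y - cos y / sin y)) (at y)"
proof -
  note p = trig_pos[OF assms]
  show ?thesis unfolding aa_def
    by (rule derivative_eq_intros refl | use assms p in force)+
qed

lemma deriv_bb: assumes "0 < y" "y < pi/2"
  shows "(bb has_real_derivative (sin y / cos y)) (at y)"
proof -
  note p = trig_pos[OF assms]
  show ?thesis unfolding bb_def
    by (rule derivative_eq_intros refl | use assms p in force)+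
qed

lemma deriv_ll: assumes "0 < y" "y < pi/2"
  shows "(ll has_real_derivative (y * sin y / NN y - 2/y - cos y / sin y)) (at y)"
proof -
  note p = trig_pos[OF assms]
  show ?thesis unfolding ll_def NN_def
    by (rule derivative_eq_intros refl | use assms p[unfolded NN_def] in force)+
qed

lemma g1_pos: assumes "0 < x" "x < pi/2" shows "0 < ll x - 2/5 * aa x"
proof (rule pos_from_zero[where f="\<lambda>y. ll y - 2/5 * aa y" and X="pi/2", OF _ _ _ assms])
  fix y :: real assume y: "0 < y" "y < pi/2"
  note p = trig_pos[OF y]
  show "((\<lambda>y. ll y - 2/5 * aa y) has_real_derivative
     ((y * sin y / NN y - 2/y - cos y / sin y) - 2/5 * (1/y - cos y / sin y))) (at y)"
    by (rule DERIV_diff[OF deriv_ll[OF y] DERIV_cmult[OF deriv_aa[OF y]]])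
  have "(y * sin y / NN y - 2/y - cos y / sin y) - 2/5 * (1/y - cos y / sin y) =
    (-12 * sin y^2 + 9 * y * sin y * cos y + 3 * y^2 + 2 * y^2 * sin y^2) / (5 * y * NN y * sin y)"
    using p y unfolding NN_def[symmetric]
    apply (simp add: field_simps)
    unfolding NN_def using sin_cos_squared_add[of y] by algebra
  moreover have "0 < (-12 * sin y^2 + 9 * y * sin y * cos y + 3 * y^2 + 2 * y^2 * sin y^2) / (5 * y * NN y * sin y)"
    using hA_0[OF y] p y by simp
  ultimately show "0 < (y * sin y / NN y - 2/y - cos y / sin y) - 2/5 * (1/y - cos y / sin y)" by simp
next
  show "((\<lambda>y. ll y - 2/5 * aa y) \<longlongrightarrow> 0) (at_right 0)"
    using tendsto_diff[OF lim_ll tendsto_mult[OF tendsto_const lim_aa, of "2/5"]] by simp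
qed


lemma q_pos:
  fixes u :: real
  assumes u: "0 \<le> u" "u \<le> 5476/625"
  shows "0 < 1/72 - 19/10080*u + 11/201600*u^2 - 47/59875200*u^3 + 1/188697600*u^4"
proof -
  define U :: real where "U = 5476/625"
  define c :: real where "c = 254929/5346000000"
  have cdef: "c = 11/201600 - 47/59875200*U" unfolding c_def U_def by simp
  have h1: "47/59875200*u^3 \<le> 47/59875200*U*u^2"
  proof -
    have "u^3 = u * u^2" by (simp add: power3_eq_cube power2_eq_square)
    also have "\<dots> \<le> U * u^2" using u unfolding U_def by (intro mult_right_mono) auto
    finally show ?thesis by simp
  qed
  have h2: "0 \<le> 1/188697600*u^4" by simp
  have id: "(1/72 - 19/10080*u + c*u^2) - (1/72 - 19/10080*U + c*U^2) = (U - u) * (19/10080 - c*(u+U))"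
    by algebra
  have f1: "0 \<le> U - u" using u unfolding U_def by simp
  have f2: "0 \<le> 19/10080 - c*(u+U)"
  proof -
    have "c*(u+U) \<le> c*(2*U)" using u unfolding c_def U_def by (intro mult_left_mono) auto
    also have "\<dots> \<le> 19/10080" unfolding c_def U_def by simp
    finally show ?thesis by simp
  qed
  have "0 < 1/72 - 19/10080*U + c*U^2" unfolding c_def U_def by (simp add: power2_eq_square)
  moreover have "0 \<le> (U - u) * (19/10080 - c*(u+U))" using f1 f2 by simp
  ultimately have "0 < 1/72 - 19/10080*u + c*u^2" using id by linarith
  moreover have "c*u^2 = 11/201600*u^2 - 47/59875200*U*u^2" by (simp add: cdef algebra_simps)
  moreover have "0 \<le> u^4" by simp
  ultimately show ?thesis using h1 by linarith
qed

definition KK :: "real \<Rightarrow> real" where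
  "KK y = 148 - 23*y^2 - 58*y* sin y + (7*y^2 - 148)* cos y"

lemma KK_pos:
  assumes y: "0 < y" "y \<le> 74/25"
  shows "0 < KK y"
proof -
  have ypi: "y \<le> pi" using y pi_lo by simp
  define S where "S = y - y^3/6 + y^5/120 - y^7/5040 + y^9/362880 - y^11/39916800 + y^13/6227020800"
  define C where "C = 1 - y^2/2 + y^4/24 - y^6/720 + y^8/40320 - y^10/3628800 + y^12/479001600"
  have s: "sin y \<le> S" unfolding S_def using sin_up13[of y] y ypi by simp
  have c: "cos y \<le> C" unfolding C_def using cos_up12[of y] y ypi by simp
  have y2: "y^2 \<le> 5476/625"
  proof -
    have "y*y \<le> (74/25)*(74/25)" using y by (intro mult_mono) auto
    then show ?thesis by (simp add: power2_eq_square)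
  qed
  have neg: "7*y^2 - 148 < 0" using y2 by simp
  have "-58*y*S \<le> -58*y* sin y" using s y by simp
  moreover have "(7*y^2 - 148)*C \<le> (7*y^2 - 148)* cos y" using c neg by (intro mult_left_mono_neg) auto
  ultimately have "-58*y*S + (7*y^2 - 148)*C + 148 - 23*y^2 \<le> KK y" unfolding KK_def by simp
  moreover have "-58*y*S + (7*y^2 - 148)*C + 148 - 23*y^2 =
     y^6 * (1/72 - 19/10080*(y^2) + 11/201600*(y^2)^2 - 47/59875200*(y^2)^3 + 1/188697600*(y^2)^4)"
    unfolding S_def C_def by algebra
  moreover have "0 < 1/72 - 19/10080*(y^2) + 11/201600*(y^2)^2 - 47/59875200*(y^2)^3 + 1/188697600*(y^2)^4"
    using y2 by (intro q_pos) auto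
  ultimately show ?thesis using y by (smt (verit) zero_less_power mult_pos_pos)
qed


lemma g2_pos: assumes "0 < x" "x < pi/2" shows "0 < bb x + 11 * aa x - 35 * ll x"
proof (rule pos_from_zero[where f="\<lambda>y. bb y + 11 * aa y - 35 * ll y" and X="pi/2", OF _ _ _ assms])
  fix y :: real assume y: "0 < y" "y < pi/2"
  note p = trig_pos[OF y]
  show "((\<lambda>y. bb y + 11 * aa y - 35 * ll y) has_real_derivative
     (sin y / cos y + 11 * (1/y - cos y / sin y) - 35 * (y * sin y / NN y - 2/y - cos y / sin y))) (at y)"
    by (rule DERIV_diff[OF DERIV_add[OF deriv_bb[OF y] DERIV_cmult[OF deriv_aa[OF y]]] DERIV_cmult[OF deriv_ll[OF y]]])
  have "sin y / cos y + 11 * (1/y - cos y / sin y) - 35 * (y * sin y / NN y - 2/y - cos y / sin y) =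
    (81 * sin y^2 * cos y - 57 * y * sin y + 58 * y * sin y^3 - 24 * y^2 * cos y - 12 * y^2 * sin y^2 * cos y) / (y * NN y * sin y * cos y)"
    using p y unfolding NN_def[symmetric]
    apply (simp add: field_simps)
    unfolding NN_def using sin_cos_squared_add[of y] by algebra
  moreover have "0 < (81 * sin y^2 * cos y - 57 * y * sin y + 58 * y * sin y^3 - 24 * y^2 * cos y - 12 * y^2 * sin y^2 * cos y) / (y * NN y * sin y * cos y)"
    using hB_0[OF y] p y by simp
  ultimately show "0 < sin y / cos y + 11 * (1/y - cos y / sin y) - 35 * (y * sin y / NN y - 2/y - cos y / sin y)" by simp
next
  show "((\<lambda>y. bb y + 11 * aa y - 35 * ll y) \<longlongrightarrow> 0) (at_right 0)"
    using tendsto_diff[OF tendsto_add[OF lim_bb tendsto_mult[OF tendsto_const lim_aa, of 11]] tendsto_mult[OF tendsto_const lim_ll, of 35]] by simp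
qed

lemma g5_pos: assumes "0 < x" "x < pi/2" shows "0 < bb x - 3 * aa x"
proof (rule pos_from_zero[where f="\<lambda>y. bb y - 3 * aa y" and X="pi/2", OF _ _ _ assms])
  fix y :: real assume y: "0 < y" "y < pi/2"
  note p = trig_pos[OF y]
  show "((\<lambda>y. bb y - 3 * aa y) has_real_derivative
     (sin y / cos y - 3 * (1/y - cos y / sin y))) (at y)"
    by (rule DERIV_diff[OF deriv_bb[OF y] DERIV_cmult[OF deriv_aa[OF y]]])
  have "sin y / cos y - 3 * (1/y - cos y / sin y) =
    (-3 * sin y * cos y + 3 * y - 2 * y * sin y^2) / (y * sin y * cos y)"
    using p y
    apply (simp add: field_simps)
    using sin_cos_squared_add[of y] by algebra
  moreover have "0 < (-3 * sin y * cos y + 3 * y - 2 * y * sin y^2) / (y * sin y * cos y)"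
    using hC_0[OF y] p y by simp
  ultimately show "0 < sin y / cos y - 3 * (1/y - cos y / sin y)" by simp
next
  show "((\<lambda>y. bb y - 3 * aa y) \<longlongrightarrow> 0) (at_right 0)"
    using tendsto_diff[OF lim_bb tendsto_mult[OF tendsto_const lim_aa, of 3]] by simp
qed

definition HH :: "real \<Rightarrow> real \<Rightarrow> real" where
  "HH r x = NN x * ((1 - r) * x * cos x + (2 + r) * sin x) - x^2 * sin x^2"

definition rho0 :: real where "rho0 = pi^2/4 - 2"

lemma HH_K: "HH (7/15) x = KK (2*x) / 120"
  unfolding HH_def NN_def KK_def sin_double cos_double
  using sin_cos_squared_add[of x] by algebra

lemma HH_shift: "HH r x = HH (7/15) x + (r - 7/15) * NN x^2"
  unfolding HH_def NN_def by algebra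

lemma pi2_bounds: "9.8696 < pi^2" "pi^2 < 9.8697"
proof -
  have "3.1415926^2 < pi^2" using pi_lo by (intro power_strict_mono) auto
  then show "9.8696 < pi^2" by (simp add: power2_eq_square)
  have "pi^2 < 3.1415927^2" using pi_hi pi_gt_zero by (intro power_strict_mono) auto
  then show "pi^2 < 9.8697" by (simp add: power2_eq_square)
qed

lemma rho0_ge: "7/15 \<le> rho0" unfolding rho0_def using pi2_bounds by simp

lemma HH_pos1: assumes "0 < x" "x \<le> 37/25" shows "0 < HH rho0 x"
proof -
  have "0 < KK (2*x)" using assms by (intro KK_pos) auto
  then have "0 < HH (7/15) x" by (simp add: HH_K)
  moreover have "0 \<le> (rho0 - 7/15) * NN x^2" using rho0_ge by simp
  ultimately show ?thesis by (subst HH_shift) simp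
qed


lemma HH_deriv: "((\<lambda>x. HH rho0 x) has_real_derivative
   (3 * NN x * cos x - x^2 * sin x * cos x - (1 - 2 * rho0) * x * NN x * sin x)) (at x)"
  unfolding HH_def NN_def
  apply (rule derivative_eq_intros refl | force)+
  apply (simp add: numeral_2_eq_2)
  apply (simp add: algebra_simps)?
  done

lemma HH_half_pi: "HH rho0 (pi/2) = 0"
  unfolding HH_def NN_def rho0_def by (simp add: power2_eq_square field_simps)

lemma DD_neg:
  assumes z: "37/25 \<le> z" "z \<le> pi/2"
  shows "3 * NN z * cos z - z^2 * sin z * cos z - (1 - 2 * rho0) * z * NN z * sin z < 0"
proof -
  define t where "t = pi/2 - z"
  have t: "0 \<le> t" "t \<le> 0.0908" using z pi_hi unfolding t_def by auto
  have c: "cos z = sin t" unfolding t_def by (simp add: cos_sin_eq)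
  have s: "sin z = cos t" unfolding t_def by (simp add: sin_cos_eq)
  have c0: "0 \<le> cos z" using z pi_gt_zero by (intro cos_ge_zero) auto
  have c1: "cos z \<le> 0.0908" using c sin_x_le_x[OF t(1)] t by simp
  have "1 - t^2/2 \<le> cos t" using cos_lo2[of t] t pi_gt3 by simp
  moreover have "t^2 \<le> 0.0908^2" using t by (intro power_mono) auto
  ultimately have s1: "0.9958 \<le> sin z" using s by (simp add: power2_eq_square)
  have s2: "sin z \<le> 1" by simp
  have zc: "z * cos z \<le> 1.5708 * 0.0908" using z pi_hi c0 c1 by (intro mult_mono) auto
  have zc0: "0 \<le> z * cos z" using z c0 by simp
  have n1: "0.853 \<le> NN z" using s1 zc unfolding NN_def by simp
  have n2: "NN z \<le> sin z" using zc0 unfolding NN_def by simp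
  have z2: "2.1904 \<le> z^2"
  proof -
    have "(37/25)^2 \<le> z^2" using z by (intro power_mono) auto
    then show ?thesis by (simp add: power2_eq_square)
  qed
  have A: "3 * NN z - z^2 * sin z \<le> 0.8096"
  proof -
    have "3 * NN z - z^2 * sin z \<le> sin z * (3 - z^2)" using n2 by (simp add: algebra_simps)
    also have "\<dots> \<le> 0.8096"
    proof (cases "3 - z^2 \<ge> 0")
      case True
      then have "sin z * (3 - z^2) \<le> 1 * (3 - z^2)" using s2 by (intro mult_right_mono) auto
      then show ?thesis using z2 by simp
    next
      case False then have "sin z * (3 - z^2) \<le> 0" using s1 by (simp add: mult_nonneg_nonpos)
      then show ?thesis by simp
    qed
    finally show ?thesis .
  qed
  have A2: "cos z * (3 * NN z - z^2 * sin z) \<le> 0.0908 * 0.8096"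
  proof (cases "3 * NN z - z^2 * sin z \<ge> 0")
    case True then show ?thesis using A c0 c1 by (intro mult_mono) auto
  next
    case False then have "cos z * (3 * NN z - z^2 * sin z) \<le> 0" using c0 by (simp add: mult_nonneg_nonpos)
    then show ?thesis by simp
  qed
  have k: "0.0651 \<le> 1 - 2 * rho0" unfolding rho0_def using pi2_bounds by simp
  have B: "0.0651 * 1.48 * 0.853 * 0.9958 \<le> (1 - 2 * rho0) * z * NN z * sin z"
    using k z n1 s1 by (intro mult_mono) auto
  have "3 * NN z * cos z - z^2 * sin z * cos z - (1 - 2 * rho0) * z * NN z * sin z
      = cos z * (3 * NN z - z^2 * sin z) - (1 - 2 * rho0) * z * NN z * sin z" by (simp add: algebra_simps)
  then show ?thesis using A2 B by simp
qed

lemma HH_pos2: assumes "37/25 \<le> x" "x < pi/2" shows "0 < HH rho0 x"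
proof -
  have "HH rho0 (pi/2) < HH rho0 x"
  proof (rule DERIV_neg_imp_decreasing[OF assms(2)])
    fix z assume "x \<le> z" "z \<le> pi/2"
    then show "\<exists>y. ((\<lambda>x. HH rho0 x) has_real_derivative y) (at z) \<and> y < 0"
      using HH_deriv[of z] DD_neg[of z] assms by auto
  qed
  then show ?thesis using HH_half_pi by simp
qed

lemma HH_pos: assumes "0 < x" "x < pi/2" shows "0 < HH rho0 x"
  using HH_pos1[of x] HH_pos2[of x] assms by (cases "x \<le> 37/25") auto

lemma g4_pos: assumes "0 < x" "x < pi/2" shows "0 < rho0 * aa x - ll x"
proof (rule pos_from_zero[where f="\<lambda>y. rho0 * aa y - ll y" and X="pi/2", OF _ _ _ assms])
  fix y :: real assume y: "0 < y" "y < pi/2"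
  note p = trig_pos[OF y]
  show "((\<lambda>y. rho0 * aa y - ll y) has_real_derivative
     (rho0 * (1/y - cos y / sin y) - (y * sin y / NN y - 2/y - cos y / sin y))) (at y)"
    by (rule DERIV_diff[OF DERIV_cmult[OF deriv_aa[OF y]] deriv_ll[OF y]])
  have "rho0 * (1/y - cos y / sin y) - (y * sin y / NN y - 2/y - cos y / sin y) = HH rho0 y / (y * NN y * sin y)"
    using p y unfolding HH_def
    apply (simp add: field_simps)
    unfolding NN_def by algebra
  moreover have "0 < HH rho0 y / (y * NN y * sin y)"
    using HH_pos[OF y] p y by simp
  ultimately show "0 < rho0 * (1/y - cos y / sin y) - (y * sin y / NN y - 2/y - cos y / sin y)" by simp
next
  show "((\<lambda>y. rho0 * aa y - ll y) \<longlongrightarrow> 0) (at_right 0)"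
    using tendsto_diff[OF tendsto_mult[OF tendsto_const lim_aa, of rho0] lim_ll] by simp
qed


definition Phi :: "real \<Rightarrow> real \<Rightarrow> real" where
  "Phi p t = (if p = 0 then t else (1 - exp (- p * t)) / p)"

lemma Phi_deriv: "((Phi p) has_real_derivative exp (- p * t)) (at t)"
proof (cases "p = 0")
  case True
  then show ?thesis unfolding Phi_def by (simp add: DERIV_ident)
next
  case False
  have "((\<lambda>t. (1 - exp (- p * t)) / p) has_real_derivative exp (- p * t)) (at t)"
    apply (rule derivative_eq_intros refl | use False in force)+
    done
  then show ?thesis unfolding Phi_def using False by simp
qed

lemma Phi_0: "Phi p 0 = 0" unfolding Phi_def by simp

lemma Phi_cont: "isCont (Phi p) t"
  using Phi_deriv DERIV_isCont by blast

lemma Phi_mono: assumes "q \<le> q'" "0 \<le> t" shows "Phi q' t \<le> Phi q t"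
proof -
  have "0 \<le> Phi q t - Phi q' t"
  proof (rule nonneg_from_zero[where f="\<lambda>t. Phi q t - Phi q' t" and f'="\<lambda>t. exp (- q * t) - exp (- q' * t)", OF _ _ _ assms(2)])
    fix y :: real assume y: "0 \<le> y" "y \<le> t"
    show "((\<lambda>t. Phi q t - Phi q' t) has_real_derivative exp (- q * y) - exp (- q' * y)) (at y)"
      by (intro DERIV_diff Phi_deriv)
    have "- q' * y \<le> - q * y" using assms y by (simp add: mult_right_mono)
    then show "0 \<le> exp (- q * y) - exp (- q' * y)" by simp
  qed (simp add: Phi_0)
  then show ?thesis by simp
qed

lemma Fsin_Phi: assumes "0 < x" "x < pi/2" shows "Fsin p x = Phi p (aa x)"
proof -
  note pp = trig_pos[OF assms]
  have sx: "0 < sin x / x" using pp assms by simp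
  have "ln (sin x / x) = - aa x" unfolding aa_def using pp assms by (simp add: ln_div)
  then show ?thesis unfolding Fsin_def Phi_def using sx pp assms by (simp add: powr_def)
qed

lemma Gcos_Phi: assumes "0 < x" "x < pi/2" shows "Gcos q x = Phi q (bb x) / 3"
proof -
  note pp = trig_pos[OF assms]
  show ?thesis unfolding Gcos_def Phi_def bb_def using pp by (auto simp: powr_def field_simps)
qed

lemma aa_nonneg: assumes "0 < x" "x < pi/2" shows "0 \<le> aa x"
  using trig_pos[OF assms] sin_x_le_x[of x] assms unfolding aa_def by simp

lemma bb_nonneg: assumes "0 < x" "x < pi/2" shows "0 \<le> bb x"
  using trig_pos[OF assms] unfolding bb_def by simp

lemma Gcos_mono: assumes "q \<le> q'" "0 < x" "x < pi/2" shows "Gcos q' x \<le> Gcos q x"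
  unfolding Gcos_Phi[OF assms(2,3)] using Phi_mono[OF assms(1) bb_nonneg[OF assms(2,3)]] by simp

lemma key_deriv:
  assumes y: "0 < y" "y < pi/2"
  shows "exp (- p * aa y) * (1/y - cos y / sin y) = exp (- p * aa y + ln (NN y) - ln y - ln (sin y))"
    and "exp (- q * bb y) * (sin y / cos y) / 3 = exp (- q * bb y + ln (sin y) - ln 3 + bb y)"
proof -
  note pp = trig_pos[OF y]
  have "1/y - cos y / sin y = NN y / (y * sin y)" using pp y unfolding NN_def by (simp add: field_simps)
  also have "\<dots> = exp (ln (NN y) - ln y - ln (sin y))" using pp y by (simp add: exp_diff)
  finally have "exp (- p * aa y) * (1/y - cos y / sin y) = exp (- p * aa y) * exp (ln (NN y) - ln y - ln (sin y))" by simp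
  also have "\<dots> = exp (- p * aa y + (ln (NN y) - ln y - ln (sin y)))" by (rule exp_add[symmetric])
  finally show "exp (- p * aa y) * (1/y - cos y / sin y) = exp (- p * aa y + ln (NN y) - ln y - ln (sin y))"
    by (simp add: algebra_simps)
  have "sin y / cos y / 3 = exp (ln (sin y) - ln 3 + bb y)" using pp unfolding bb_def by (simp add: exp_diff exp_add exp_minus field_simps)
  then have "exp (- q * bb y) * (sin y / cos y) / 3 = exp (- q * bb y) * exp (ln (sin y) - ln 3 + bb y)"
    by (metis times_divide_eq_right)
  also have "\<dots> = exp (- q * bb y + (ln (sin y) - ln 3 + bb y))" by (rule exp_add[symmetric])
  finally show "exp (- q * bb y) * (sin y / cos y) / 3 = exp (- q * bb y + ln (sin y) - ln 3 + bb y)"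
    by (simp add: algebra_simps)
qed

lemma key_exp:
  assumes y: "0 < y" "y < pi/2"
  shows "(- p * aa y + ln (NN y) - ln y - ln (sin y)) - (- q * bb y + ln (sin y) - ln 3 + bb y)
       = ll y - (p - 1) * aa y + (q - 1) * bb y"
  unfolding ll_def aa_def by (simp add: algebra_simps)

lemma lim_f: "((\<lambda>y. Phi p (aa y) - Phi q (bb y) / 3) \<longlongrightarrow> 0) (at_right 0)"
proof -
  have "((\<lambda>y. Phi p (aa y)) \<longlongrightarrow> Phi p 0) (at_right 0)"
    by (rule isCont_tendsto_compose[OF Phi_cont lim_aa])
  moreover have "((\<lambda>y. Phi q (bb y)) \<longlongrightarrow> Phi q 0) (at_right 0)"
    by (rule isCont_tendsto_compose[OF Phi_cont lim_bb])
  ultimately have "((\<lambda>y. Phi p (aa y) - Phi q (bb y) / 3) \<longlongrightarrow> Phi p 0 - Phi q 0 / 3) (at_right 0)"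
    by (intro tendsto_diff tendsto_divide tendsto_const) auto
  then show ?thesis by (simp add: Phi_0)
qed

lemma cmp_pos:
  assumes D: "\<And>y. 0 < y \<Longrightarrow> y < pi/2 \<Longrightarrow> 0 < ll y - (p - 1) * aa y + (q - 1) * bb y"
    and x: "0 < x" "x < pi/2"
  shows "Gcos q x < Fsin p x"
proof -
  have "0 < Phi p (aa x) - Phi q (bb x) / 3"
  proof (rule pos_from_zero[where X="pi/2", OF _ _ lim_f x])
    fix y :: real assume y: "0 < y" "y < pi/2"
    show "((\<lambda>y. Phi p (aa y) - Phi q (bb y) / 3) has_real_derivative
       exp (- p * aa y) * (1/y - cos y / sin y) - exp (- q * bb y) * (sin y / cos y) / 3) (at y)"
      by (intro DERIV_diff DERIV_cdivide DERIV_chain2[OF Phi_deriv] deriv_aa deriv_bb y)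
    show "0 < exp (- p * aa y) * (1/y - cos y / sin y) - exp (- q * bb y) * (sin y / cos y) / 3"
      unfolding key_deriv[OF y] using D[OF y] key_exp[OF y, of p q] by simp
  qed
  moreover have "Gcos q x = Phi q (bb x) / 3" "Fsin p x = Phi p (aa x)" using Fsin_Phi[OF x] Gcos_Phi[OF x] by auto
  ultimately show ?thesis by linarith
qed

lemma cmp_neg:
  assumes D: "\<And>y. 0 < y \<Longrightarrow> y < pi/2 \<Longrightarrow> ll y - (p - 1) * aa y + (q - 1) * bb y < 0"
    and x: "0 < x" "x < pi/2"
  shows "Fsin p x < Gcos q x"
proof -
  have lim: "((\<lambda>y. Phi q (bb y) / 3 - Phi p (aa y)) \<longlongrightarrow> 0) (at_right 0)"
    using tendsto_minus[OF lim_f[of p q]] by simp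
  have "0 < Phi q (bb x) / 3 - Phi p (aa x)"
  proof (rule pos_from_zero[where X="pi/2", OF _ _ lim x])
    fix y :: real assume y: "0 < y" "y < pi/2"
    show "((\<lambda>y. Phi q (bb y) / 3 - Phi p (aa y)) has_real_derivative
       exp (- q * bb y) * (sin y / cos y) / 3 - exp (- p * aa y) * (1/y - cos y / sin y)) (at y)"
      by (intro DERIV_diff DERIV_cdivide DERIV_chain2[OF Phi_deriv] deriv_aa deriv_bb y)
    show "0 < exp (- q * bb y) * (sin y / cos y) / 3 - exp (- p * aa y) * (1/y - cos y / sin y)"
      unfolding key_deriv[OF y] using D[OF y] key_exp[OF y, of p q] by simp
  qed
  moreover have "Gcos q x = Phi q (bb x) / 3" "Fsin p x = Phi p (aa x)" using Fsin_Phi[OF x] Gcos_Phi[OF x] by auto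
  ultimately show ?thesis by linarith
qed


lemma caseA: assumes "pi^2/4 - 1 \<le> p" "0 < x" "x < pi/2" shows "Fsin p x < Gcos 1 x"
proof (rule cmp_neg[OF _ assms(2,3)])
  fix y :: real assume y: "0 < y" "y < pi/2"
  have "rho0 * aa y \<le> (p - 1) * aa y" using aa_nonneg[OF y] assms(1) unfolding rho0_def
    by (intro mult_right_mono) auto
  then show "ll y - (p - 1) * aa y + (1 - 1) * bb y < 0" using g4_pos[OF y] by simp
qed

lemma caseB: assumes "46/35 \<le> p" "0 < x" "x < pi/2" shows "Fsin p x < Gcos (34/35) x"
proof (rule cmp_neg[OF _ assms(2,3)])
  fix y :: real assume y: "0 < y" "y < pi/2"
  have "11/35 * aa y \<le> (p - 1) * aa y" using aa_nonneg[OF y] assms(1)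
    by (intro mult_right_mono) auto
  then show "ll y - (p - 1) * aa y + (34/35 - 1) * bb y < 0" using g2_pos[OF y] by simp
qed

lemma caseC: assumes "p < 7/5" "0 < x" "x < pi/2" shows "Gcos 1 x < Fsin p x"
proof (rule cmp_pos[OF _ assms(2,3)])
  fix y :: real assume y: "0 < y" "y < pi/2"
  have "(p - 1) * aa y \<le> 2/5 * aa y" using aa_nonneg[OF y] assms(1)
    by (intro mult_right_mono) auto
  then show "0 < ll y - (p - 1) * aa y + (1 - 1) * bb y" using g1_pos[OF y] by simp
qed

lemma caseD: assumes "7/5 \<le> p" "0 < x" "x < pi/2" shows "Gcos (p/3 + 8/15) x < Fsin p x"
proof (rule cmp_pos[OF _ assms(2,3)])
  fix y :: real assume y: "0 < y" "y < pi/2"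
  have e: "ll y - (p - 1) * aa y + (p/3 + 8/15 - 1) * bb y = (ll y - 2/5 * aa y) + (p - 7/5) * (bb y / 3 - aa y)"
    by algebra
  have "0 \<le> (p - 7/5) * (bb y / 3 - aa y)" using assms(1) g5_pos[OF y] by simp
  then show "0 < ll y - (p - 1) * aa y + (p/3 + 8/15 - 1) * bb y" using g1_pos[OF y] e by simp
qed

lemma caseE: assumes "p < 46/35" "0 < x" "x < pi/2" shows "Fsin p x < Gcos (p/3 + 8/15) x"
proof (rule cmp_neg[OF _ assms(2,3)])
  fix y :: real assume y: "0 < y" "y < pi/2"
  have e: "ll y - (p - 1) * aa y + (p/3 + 8/15 - 1) * bb y = (ll y - 11/35 * aa y - bb y / 35) + (p - 46/35) * (bb y / 3 - aa y)"
    by algebra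
  have "(p - 46/35) * (bb y / 3 - aa y) \<le> 0" using assms(1) g5_pos[OF y] by (simp add: mult_nonpos_nonneg)
  then show "ll y - (p - 1) * aa y + (p/3 + 8/15 - 1) * bb y < 0" using g2_pos[OF y] e by simp
qed

theorem theorem2:
  shows "(\<forall>p q1 q2 x::real. p \<ge> pi\<^sup>2 / 4 - 1 \<and> q2 \<ge> p / 3 + 8 / 15 \<and> q1 \<le> 1
            \<and> 0 < x \<and> x < pi / 2 \<longrightarrow> double_ineq p q1 q2 x)
       \<and> (\<forall>p q1 q2 x::real. 7 / 5 \<le> p \<and> p < pi\<^sup>2 / 4 - 1 \<and> q2 \<ge> p / 3 + 8 / 15 \<and> q1 \<le> 34 / 35
            \<and> 0 < x \<and> x < pi / 2 \<longrightarrow> double_ineq p q1 q2 x)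
       \<and> (\<forall>p q1 q2 x::real. 46 / 35 \<le> p \<and> p < 7 / 5 \<and> q2 \<ge> 1 \<and> q1 \<le> 34 / 35
            \<and> 0 < x \<and> x < pi / 2 \<longrightarrow> double_ineq p q1 q2 x)
       \<and> (\<forall>p q1 q2 x::real. p < 46 / 35 \<and> q2 \<ge> 1 \<and> q1 \<le> p / 3 + 8 / 15
            \<and> 0 < x \<and> x < pi / 2 \<longrightarrow> double_ineq p q1 q2 x)"
proof (intro conjI allI impI; elim conjE)
  have P0: "7/5 \<le> pi\<^sup>2 / 4 - 1" using pi2_bounds by simp
  fix p q1 q2 x :: real
  {
    assume a: "p \<ge> pi\<^sup>2 / 4 - 1" "q2 \<ge> p / 3 + 8 / 15" "q1 \<le> 1" "0 < x" "x < pi / 2"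
    have "Gcos q2 x \<le> Gcos (p/3 + 8/15) x" using a by (intro Gcos_mono) auto
    also have "\<dots> < Fsin p x" using a P0 by (intro caseD) auto
    finally have 1: "Gcos q2 x < Fsin p x" .
    have "Fsin p x < Gcos 1 x" using a by (intro caseA) auto
    also have "\<dots> \<le> Gcos q1 x" using a by (intro Gcos_mono) auto
    finally show "double_ineq p q1 q2 x" unfolding double_ineq_def using 1 by simp
  }
  {
    assume a: "7 / 5 \<le> p" "p < pi\<^sup>2 / 4 - 1" "q2 \<ge> p / 3 + 8 / 15" "q1 \<le> 34 / 35" "0 < x" "x < pi / 2"
    have "Gcos q2 x \<le> Gcos (p/3 + 8/15) x" using a by (intro Gcos_mono) auto
    also have "\<dots> < Fsin p x" using a by (intro caseD) auto
    finally have 1: "Gcos q2 x < Fsin p x" .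
    have "Fsin p x < Gcos (34/35) x" using a by (intro caseB) auto
    also have "\<dots> \<le> Gcos q1 x" using a by (intro Gcos_mono) auto
    finally show "double_ineq p q1 q2 x" unfolding double_ineq_def using 1 by simp
  }
  {
    assume a: "46 / 35 \<le> p" "p < 7 / 5" "q2 \<ge> 1" "q1 \<le> 34 / 35" "0 < x" "x < pi / 2"
    have "Gcos q2 x \<le> Gcos 1 x" using a by (intro Gcos_mono) auto
    also have "\<dots> < Fsin p x" using a by (intro caseC) auto
    finally have 1: "Gcos q2 x < Fsin p x" .
    have "Fsin p x < Gcos (34/35) x" using a by (intro caseB) auto
    also have "\<dots> \<le> Gcos q1 x" using a by (intro Gcos_mono) auto
    finally show "double_ineq p q1 q2 x" unfolding double_ineq_def using 1 by simp
  }
  {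
    assume a: "p < 46 / 35" "q2 \<ge> 1" "q1 \<le> p / 3 + 8 / 15" "0 < x" "x < pi / 2"
    have "Gcos q2 x \<le> Gcos 1 x" using a by (intro Gcos_mono) auto
    also have "\<dots> < Fsin p x" using a by (intro caseC) auto
    finally have 1: "Gcos q2 x < Fsin p x" .
    have "Fsin p x < Gcos (p/3 + 8/15) x" using a by (intro caseE) auto
    also have "\<dots> \<le> Gcos q1 x" using a by (intro Gcos_mono) auto
    finally show "double_ineq p q1 q2 x" unfolding double_ineq_def using 1 by simp
  }
qed


end
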